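(* For every $n\geq0$ and every finite field $\mathbb{F}_q$, $\sum_{\alpha\in\mathbb{F}_q^*}N_{\mathbb{A}_n}(\alpha)=\frac{q^{n+2}+(-1)^{n+1}}{q+1}$, and this is the number of $\mathbb{F}_q$-points of $Y_{\mathbb{A}_n}$.
   Context: For $\alpha$ invertible and $n\ge1$, $X_n(\alpha)$ is the affine variety in variables $x_1,\dots,x_n,x'_1,\dots,x'_n$ defined by $x_1x'_1=1+\alpha x_2$, $x_ix'_i=1+x_{i-1}x_{i+1}$ for $2\le i\le n-1$, $x_nx'_n=1+x_{n-1}$ (for $n=1$: $x_1x'_1=1+\alpha$); $X_0(\alpha)$ is a point. $N_{\mathbb{A}_n}(\alpha)$ is the number of $\mathbb{F}_q$-points of $X_n(\alpha)$. $Y_{\mathbb{A}_n}$ is the variety in variables $(\alpha,x_1,\dots,x_n,x'_1,\dots,x'_n)$ with $\alpha\neq0$ defined by the same equations (the union of all $X_n(\alpha)$, $\alpha$ invertible); by convention $Y_{\mathbb{A}_0}=\mathbb{A}^1\setminus\{0\}$. *)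

theory Defs
  imports Complex_Main
begin

text \<open>Equations of X_n(alpha) in variables x_1..x_n, x'_1..x'_n (1-based indices,
  coordinates stored as functions nat => 'a).\<close>
definition A_eqs :: "nat \<Rightarrow> 'a::field \<Rightarrow> (nat \<Rightarrow> 'a) \<Rightarrow> (nat \<Rightarrow> 'a) \<Rightarrow> bool" where
  "A_eqs n \<alpha> x x' \<longleftrightarrow>
     (if n = 0 then True
      else if n = 1 then x 1 * x' 1 = 1 + \<alpha>
      else x 1 * x' 1 = 1 + \<alpha> * x 2
         \<and> (\<forall>i. 2 \<le> i \<and> i \<le> n - 1 \<longrightarrow> x i * x' i = 1 + x (i - 1) * x (i + 1))
         \<and> x n * x' n = 1 + x (n - 1))"

definition coords :: "nat \<Rightarrow> (nat \<Rightarrow> 'a::zero) set" where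
  "coords n = {x. \<forall>i. i \<notin> {1..n} \<longrightarrow> x i = 0}"

definition X_A :: "nat \<Rightarrow> 'a::field \<Rightarrow> ((nat \<Rightarrow> 'a) \<times> (nat \<Rightarrow> 'a)) set" where
  "X_A n \<alpha> = {(x, x'). x \<in> coords n \<and> x' \<in> coords n \<and> A_eqs n \<alpha> x x'}"

definition N_A :: "nat \<Rightarrow> 'a::{finite,field} \<Rightarrow> nat" where
  "N_A n \<alpha> = card (X_A n \<alpha>)"

text \<open>Y_{A_n}: union over invertible alpha; for n = 0 this is A^1 minus 0, as by convention.\<close>
definition Y_A :: "nat \<Rightarrow> ('a::field \<times> (nat \<Rightarrow> 'a) \<times> (nat \<Rightarrow> 'a)) set" where
  "Y_A n = {(\<alpha>, x, x'). \<alpha> \<noteq> 0 \<and> x \<in> coords n \<and> x' \<in> coords n \<and> A_eqs n \<alpha> x x'}"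

end

theory Submission imports Defs begin

fun nh :: "'a \<Rightarrow> 'a list \<Rightarrow> 'a" where
  "nh b [] = b" | "nh b (y # _) = y"

fun eqsL :: "'a::field \<Rightarrow> 'a \<Rightarrow> 'a list \<Rightarrow> 'a list \<Rightarrow> bool" where
  "eqsL a b [] [] = True"
| "eqsL a b (x # xs) (x' # ys) = (x * x' = 1 + a * nh b xs \<and> eqsL x b xs ys)"
| "eqsL a b _ _ = False"

definition SL :: "nat \<Rightarrow> 'a::field \<Rightarrow> ('a list \<times> 'a list) set" where
  "SL n a = {(xs, ys). length xs = n \<and> eqsL a 1 xs ys}"

lemma eqsL_len: "eqsL a b xs ys \<Longrightarrow> length ys = length xs"
  by (induction a b xs ys rule: eqsL.induct) auto

lemma finite_SL: "finite (SL n (a::'a::{finite,field}))"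
proof -
  have "SL n a \<subseteq> {xs. set xs \<subseteq> UNIV \<and> length xs = n} \<times> {xs. set xs \<subseteq> UNIV \<and> length xs = n}"
    using eqsL_len unfolding SL_def by fastforce
  moreover have "finite ({xs. set xs \<subseteq> (UNIV::'a set) \<and> length xs = n} \<times> {xs. set xs \<subseteq> (UNIV::'a set) \<and> length xs = n})"
    by (intro finite_cartesian_product finite_lists_length_eq) auto
  ultimately show ?thesis by (rule finite_subset)
qed

lemma lin_card: "card {x'. (x::'a::{finite,field}) * x' = c} = (if x \<noteq> 0 then 1 else if c = 0 then card (UNIV::'a set) else 0)"
proof (cases "x = 0")
  case True then show ?thesis by (cases "c = 0") auto
next
  case False
  then have "{x'. x * x' = c} = {c / x}" by (auto simp: field_simps)
  then show ?thesis using False by simp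
qed

lemma decomp:
  fixes a :: "'a::{finite,field}"
  shows "card {p \<in> SL (Suc n) a. P (hd (fst p))} =
    (\<Sum>x\<in>{x. P x}. \<Sum>p\<in>SL n x. card {x'. x * x' = 1 + a * nh 1 (fst p)})"
proof -
  define T where "T = (SIGMA x:{x. P x}. SIGMA p:SL n x. {x'. x * x' = 1 + a * nh 1 (fst p)})"
  define f where "f = (\<lambda>(x::'a, p::'a list \<times> 'a list, x'::'a). (x # fst p, x' # snd p))"
  have eq: "{p \<in> SL (Suc n) a. P (hd (fst p))} = f ` T"
  proof
    show "{p \<in> SL (Suc n) a. P (hd (fst p))} \<subseteq> f ` T"
    proof
      fix p assume p: "p \<in> {p \<in> SL (Suc n) a. P (hd (fst p))}"
      obtain xs ys where pe: "p = (xs, ys)" by force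
      from p pe have l: "length xs = Suc n" and e: "eqsL a 1 xs ys" and P: "P (hd xs)"
        by (auto simp: SL_def)
      from l obtain x xs0 where xs: "xs = x # xs0" by (cases xs) auto
      from e eqsL_len[OF e] l obtain x' ys0 where ys: "ys = x' # ys0" by (cases ys) auto
      have "(x, (xs0, ys0), x') \<in> T" using e l P unfolding T_def SL_def xs ys by auto
      moreover have "p = f (x, (xs0, ys0), x')" unfolding f_def pe xs ys by simp
      ultimately show "p \<in> f ` T" by blast
    qed
  next
    show "f ` T \<subseteq> {p \<in> SL (Suc n) a. P (hd (fst p))}"
      unfolding T_def f_def SL_def by auto
  qed
  have inj: "inj_on f T" unfolding inj_on_def f_def by auto
  have "card {p \<in> SL (Suc n) a. P (hd (fst p))} = card T" using eq inj card_image by metis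
  also have "\<dots> = (\<Sum>x\<in>{x. P x}. card (SIGMA p:SL n x. {x'. x * x' = 1 + a * nh 1 (fst p)}))"
    unfolding T_def by (rule card_SigmaI) (auto intro: finite_SL)
  also have "\<dots> = (\<Sum>x\<in>{x. P x}. \<Sum>p\<in>SL n x. card {x'. x * x' = 1 + a * nh 1 (fst p)})"
    by (intro sum.cong refl card_SigmaI) (auto intro: finite_SL)
  finally show ?thesis .
qed


definition cnt :: "nat \<Rightarrow> 'a::{finite,field} \<Rightarrow> nat" where "cnt n a = card (SL n a)"
definition ss :: "nat \<Rightarrow> 'a::{finite,field} itself \<Rightarrow> nat" where
  "ss n _ = (\<Sum>a\<in>(UNIV::'a set) - {0}. cnt n a)"

lemma SL0: "SL 0 a = {([], [])}"
  unfolding SL_def by auto (metis eqsL.simps(4) neq_Nil_conv)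

lemma sum_if_q: "(\<Sum>p\<in>A. if Q p then (c::nat) else 0) = c * card {p\<in>A. Q p}" if "finite A"
proof -
  have "{p\<in>A. Q p} = A \<inter> Collect Q" by auto
  then show ?thesis using that by (simp add: sum.If_cases)
qed

lemma rec1:
  fixes a :: "'a::{finite,field}"
  shows "cnt (Suc n) a = ss n TYPE('a) + card (UNIV::'a set) * card {p \<in> SL n 0. 1 + a * nh 1 (fst p) = 0}"
proof -
  have "cnt (Suc n) a = card {p \<in> SL (Suc n) a. True}" unfolding cnt_def by simp
  also have "\<dots> = (\<Sum>x\<in>UNIV. \<Sum>p\<in>SL n x. card {x'. x * x' = 1 + a * nh 1 (fst p)})"
    using decomp[of n a "\<lambda>_. True"] by simp
  also have "\<dots> = (\<Sum>p\<in>SL n 0. card {x'. (0::'a) * x' = 1 + a * nh 1 (fst p)}) +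
       (\<Sum>x\<in>UNIV - {0}. \<Sum>p\<in>SL n x. card {x'. x * x' = 1 + a * nh 1 (fst p)})"
    by (subst sum.remove[of UNIV 0]) auto
  also have "(\<Sum>x\<in>UNIV - {0}. \<Sum>p\<in>SL n x. card {x'. x * x' = 1 + a * nh 1 (fst p)}) = ss n TYPE('a)"
    unfolding ss_def cnt_def by (intro sum.cong refl) (simp add: lin_card)
  also have "(\<Sum>p\<in>SL n 0. card {x'. (0::'a) * x' = 1 + a * nh 1 (fst p)})
     = (\<Sum>p\<in>SL n 0. if 1 + a * nh 1 (fst p) = 0 then card (UNIV::'a set) else 0)"
    by (intro sum.cong refl) (simp add: lin_card)
  also have "\<dots> = card (UNIV::'a set) * card {p \<in> SL n 0. 1 + a * nh 1 (fst p) = 0}"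
    by (rule sum_if_q) (rule finite_SL)
  finally show ?thesis by simp
qed

lemma g0: "card {p \<in> SL 0 (0::'a::{finite,field}). 1 + a * nh 1 (fst p) = 0} = (if a = -1 then 1 else 0)"
proof -
  have "1 + a = 0 \<longleftrightarrow> a = -1" by (metis add.commute add_eq_0_iff)
  moreover have "{p \<in> {([], [])}. 1 + a * nh 1 (fst p) = 0} = (if a = -1 then {([], [])} else {})"
    using calculation by auto
  then have "{p \<in> SL 0 (0::'a). 1 + a * nh 1 (fst p) = 0} = (if a = -1 then {([], [])} else {})"
    by (simp only: SL0)
  then show ?thesis by simp
qed

lemma gS:
  fixes a :: "'a::{finite,field}"
  assumes "a \<noteq> 0"
  shows "card {p \<in> SL (Suc m) 0. 1 + a * nh 1 (fst p) = 0} = cnt m (-1/a)"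
proof -
  have "{p \<in> SL (Suc m) 0. 1 + a * nh 1 (fst p) = 0} = {p \<in> SL (Suc m) 0. 1 + a * hd (fst p) = 0}"
    unfolding SL_def by (auto simp: length_Suc_conv)
  also have "card \<dots> = (\<Sum>y\<in>{y. 1 + a * y = 0}. \<Sum>p\<in>SL m y. card {y'. y * y' = 1 + 0 * nh 1 (fst p)})"
    by (rule decomp)
  also have "{y. 1 + a * y = 0} = {-1/a}"
  proof -
    have "1 + a * y = 0 \<longleftrightarrow> y = -1/a" for y
    proof -
      have "1 + a * y = 0 \<longleftrightarrow> a * y = -1" by (metis add_eq_0_iff)
      also have "\<dots> \<longleftrightarrow> y = -1/a" using assms by (metis divide_minus_left nonzero_mult_div_cancel_left mult.commute minus_divide_left divide_self_if mult_minus_right mult.right_neutral nonzero_eq_divide_eq)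
      finally show ?thesis .
    qed
    then show ?thesis by auto
  qed
  also have "(\<Sum>y\<in>{-1/a}. \<Sum>p\<in>SL m y. card {y'. y * y' = 1 + 0 * nh 1 (fst p)}) = cnt m (-1/a)"
  proof -
    have nz: "-1/a \<noteq> 0" using assms by simp
    have c1: "card {y'. (-1/a) * y' = 1 + 0 * nh 1 (fst p)} = 1" for p
      by (subst lin_card) (use nz in simp)
    have s1: "(\<Sum>y\<in>{-1/a}. G y) = G (-1/a)" for G :: "'a \<Rightarrow> nat" by simp
    have "(\<Sum>y\<in>{-1/a}. \<Sum>p\<in>SL m y. card {y'. y * y' = 1 + 0 * nh 1 (fst p)})
       = (\<Sum>p\<in>SL m (-1/a). card {y'. (-1/a) * y' = 1 + 0 * nh 1 (fst p)})" by (rule s1)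
    also have "\<dots> = (\<Sum>p\<in>SL m (-1/a). 1)" by (rule sum.cong[OF refl]) (rule c1)
    finally show ?thesis unfolding cnt_def by simp
  qed
  finally show ?thesis .
qed

lemma cardnz: "card ((UNIV::'a::{finite,field} set) - {0}) = card (UNIV::'a set) - 1"
  by (simp add: card_Diff_singleton)

lemma ss0: "ss 0 TYPE('a::{finite,field}) = card (UNIV::'a set) - 1"
  unfolding ss_def cnt_def SL0 using cardnz by simp

lemma ss1: "ss (Suc 0) TYPE('a::{finite,field}) = (card (UNIV::'a set) - 1) * ss 0 TYPE('a) + card (UNIV::'a set)"
proof -
  have "ss (Suc 0) TYPE('a) = (\<Sum>a\<in>(UNIV::'a set) - {0}. ss 0 TYPE('a) + card (UNIV::'a set) * (if a = -1 then 1 else 0))"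
    unfolding ss_def[of "Suc 0"] by (intro sum.cong refl) (simp add: rec1 g0)
  also have "\<dots> = (card (UNIV::'a set) - 1) * ss 0 TYPE('a) + card (UNIV::'a set) * (\<Sum>a\<in>(UNIV::'a set) - {0}. (if a = -1 then 1 else 0))"
    by (simp add: sum.distrib sum_distrib_left[symmetric] cardnz)
  also have "(\<Sum>a\<in>(UNIV::'a set) - {0}. (if a = -1 then 1 else 0)) = (1::nat)"
    by (simp add: sum.If_cases)
  finally show ?thesis by simp
qed

lemma ssSS: "ss (Suc (Suc m)) TYPE('a::{finite,field}) = (card (UNIV::'a set) - 1) * ss (Suc m) TYPE('a) + card (UNIV::'a set) * ss m TYPE('a)"
proof -
  have "ss (Suc (Suc m)) TYPE('a) = (\<Sum>a\<in>(UNIV::'a set) - {0}. ss (Suc m) TYPE('a) + card (UNIV::'a set) * cnt m (-1/a))"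
    unfolding ss_def[of "Suc (Suc m)"] by (intro sum.cong refl) (simp add: rec1 gS)
  also have "\<dots> = (card (UNIV::'a set) - 1) * ss (Suc m) TYPE('a) + card (UNIV::'a set) * (\<Sum>a\<in>(UNIV::'a set) - {0}. cnt m (-1/a))"
    by (simp add: sum.distrib sum_distrib_left[symmetric] cardnz)
  also have "(\<Sum>a\<in>(UNIV::'a set) - {0}. cnt m (-1/a)) = ss m TYPE('a)"
    unfolding ss_def
    by (rule sum.reindex_bij_witness[of _ "\<lambda>a. -1/a" "\<lambda>a. -1/a"]) (auto simp: field_simps)
  finally show ?thesis .
qed

lemma ss_closed:
  "real (ss n TYPE('a::{finite,field})) * (real (card (UNIV::'a set)) + 1) = real (card (UNIV::'a set)) ^ (n + 2) + (-1) ^ (n + 1)"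
proof (induction n rule: nat_less_induct)
  case (1 n)
  define q where "q = card (UNIV::'a set)"
  have q1: "q \<ge> 1" unfolding q_def by (simp add: Suc_leI finite_UNIV_card_ge_0)
  then have rq: "real (q - 1) = real q - 1" by simp
  show ?case
  proof (cases n)
    case 0
    have a: "real (ss 0 TYPE('a)) = real q - 1" using ss0[where 'a='a, folded q_def] rq by simp
    show ?thesis unfolding q_def[symmetric] 0 a by (simp add: algebra_simps power2_eq_square)
  next
    case (Suc m)
    show ?thesis
    proof (cases m)
      case 0
      have a: "real (ss 0 TYPE('a)) = real q - 1" using ss0[where 'a='a, folded q_def] rq by simp
      have b: "real (ss (Suc 0) TYPE('a)) = (real q - 1) * real (ss 0 TYPE('a)) + real q"
        by (simp only: ss1[where 'a='a, folded q_def] of_nat_add of_nat_mult rq)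
      show ?thesis unfolding q_def[symmetric] Suc 0 b a
        by (simp add: algebra_simps power3_eq_cube)
    next
      case (Suc k)
      have IH1: "real (ss (Suc k) TYPE('a)) * (real q + 1) = real q ^ (k + 3) + (-1) ^ (k + 2)"
        using "1.IH"[rule_format, of "Suc k"] \<open>n = Suc m\<close> Suc unfolding q_def by (simp add: numeral_3_eq_3 eval_nat_numeral)
      have IH2: "real (ss k TYPE('a)) * (real q + 1) = real q ^ (k + 2) + (-1) ^ (k + 1)"
        using "1.IH"[rule_format, of k] \<open>n = Suc m\<close> Suc unfolding q_def by simp
      have "real (ss n TYPE('a)) * (real q + 1) = (real q - 1) * (real (ss (Suc k) TYPE('a)) * (real q + 1)) + real q * (real (ss k TYPE('a)) * (real q + 1))"
        unfolding \<open>n = Suc m\<close> Suc ssSS[where 'a='a, folded q_def] of_nat_add of_nat_mult rq by (simp add: algebra_simps)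
      also have "\<dots> = real q ^ (n + 2) + (-1) ^ (n + 1)"
        unfolding IH1 IH2 \<open>n = Suc m\<close> Suc by (simp add: algebra_simps power_add eval_nat_numeral)
      finally show ?thesis unfolding q_def .
    qed
  qed
qed


lemma eqsL_nth: "eqsL a b xs ys \<longleftrightarrow> length ys = length xs \<and>
  (\<forall>i<length xs. xs!i * ys!i = 1 + (if i = 0 then a else xs!(i-1)) * (if Suc i < length xs then xs!(Suc i) else b))"
proof (induction xs arbitrary: a ys)
  case Nil then show ?case by (cases ys) auto
next
  case (Cons x xs)
  show ?case
  proof (cases ys)
    case Nil then show ?thesis by simp
  next
    case (Cons y ys')
    have nh: "nh b xs = (if 0 < length xs then xs!0 else b)" by (cases xs) auto
    show ?thesis unfolding Cons eqsL.simps Cons.IH nh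
      by (auto simp: All_less_Suc2 nth_Cons' split: if_splits)
  qed
qed

lemma A_eqs_alt: "A_eqs n \<alpha> x x' \<longleftrightarrow>
  (\<forall>k\<in>{1..n}. x k * x' k = 1 + (if k = 1 then \<alpha> else x (k-1)) * (if k = n then 1 else x (k+1)))"
proof (cases "n \<le> 1")
  case True then show ?thesis unfolding A_eqs_def by (cases n) auto
next
  case False
  show ?thesis
  proof
    assume "A_eqs n \<alpha> x x'"
    then show "\<forall>k\<in>{1..n}. x k * x' k = 1 + (if k = 1 then \<alpha> else x (k-1)) * (if k = n then 1 else x (k+1))"
      using False unfolding A_eqs_def by (auto simp: numeral_2_eq_2)
  next
    assume H: "\<forall>k\<in>{1..n}. x k * x' k = 1 + (if k = 1 then \<alpha> else x (k-1)) * (if k = n then 1 else x (k+1))"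
    have 1: "x 1 * x' 1 = 1 + \<alpha> * x 2" using H[rule_format, of 1] False by (simp add: numeral_2_eq_2)
    have 2: "x n * x' n = 1 + x (n-1)" using H[rule_format, of n] False by simp
    have 3: "\<forall>i. 2 \<le> i \<and> i \<le> n - 1 \<longrightarrow> x i * x' i = 1 + x (i - 1) * x (i + 1)"
      using H False by auto
    show "A_eqs n \<alpha> x x'" unfolding A_eqs_def using 1 2 3 False by auto
  qed
qed

lemma eqs_equiv: "eqsL \<alpha> 1 (map x [1..<n+1]) (map x' [1..<n+1]) \<longleftrightarrow> A_eqs n \<alpha> x x'"
proof -
  have "eqsL \<alpha> 1 (map x [1..<n+1]) (map x' [1..<n+1]) \<longleftrightarrow>
    (\<forall>i<n. x (Suc i) * x' (Suc i) = 1 + (if i = 0 then \<alpha> else x i) * (if Suc i < n then x (Suc (Suc i)) else 1))"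
  proof -
    have len: "length (map f [1..<n+1]) = n" for f :: "nat \<Rightarrow> 'a" by simp
    have nth: "i < n \<Longrightarrow> map f [1..<n+1] ! i = f (Suc i)" for f :: "nat \<Rightarrow> 'a" and i
      by (subst nth_map) (simp_all del: upt_Suc)
    show ?thesis unfolding eqsL_nth len
      by (auto simp del: upt_Suc simp add: nth split: if_splits)
  qed
  also have "\<dots> \<longleftrightarrow> (\<forall>k\<in>{1..n}. x k * x' k = 1 + (if k = 1 then \<alpha> else x (k-1)) * (if k = n then 1 else x (k+1)))"
  proof
    assume H: "\<forall>i<n. x (Suc i) * x' (Suc i) = 1 + (if i = 0 then \<alpha> else x i) * (if Suc i < n then x (Suc (Suc i)) else 1)"
    show "\<forall>k\<in>{1..n}. x k * x' k = 1 + (if k = 1 then \<alpha> else x (k-1)) * (if k = n then 1 else x (k+1))"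
    proof
      fix k assume k: "k \<in> {1..n}"
      then obtain i where "k = Suc i" "i < n" by (cases k) auto
      then show "x k * x' k = 1 + (if k = 1 then \<alpha> else x (k-1)) * (if k = n then 1 else x (k+1))"
        using H[rule_format, of i] by auto
    qed
  next
    assume H: "\<forall>k\<in>{1..n}. x k * x' k = 1 + (if k = 1 then \<alpha> else x (k-1)) * (if k = n then 1 else x (k+1))"
    show "\<forall>i<n. x (Suc i) * x' (Suc i) = 1 + (if i = 0 then \<alpha> else x i) * (if Suc i < n then x (Suc (Suc i)) else 1)"
    proof (intro allI impI)
      fix i assume "i < n"
      then show "x (Suc i) * x' (Suc i) = 1 + (if i = 0 then \<alpha> else x i) * (if Suc i < n then x (Suc (Suc i)) else 1)"
        using H[rule_format, of "Suc i"] by auto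
    qed
  qed
  finally show ?thesis unfolding A_eqs_alt .
qed


definition Phi :: "nat \<Rightarrow> (nat \<Rightarrow> 'a) \<times> (nat \<Rightarrow> 'a) \<Rightarrow> 'a list \<times> 'a list" where
  "Phi n p = (map (fst p) [1..<n+1], map (snd p) [1..<n+1])"

lemma map_inj_coords:
  assumes "x \<in> coords n" "y \<in> coords n" "map x [1..<n+1] = map y [1..<n+1]"
  shows "x = y"
proof
  fix i
  show "x i = y i"
  proof (cases "i \<in> {1..n}")
    case True
    then have "i \<in> set [1..<n+1]" by auto
    then show ?thesis using assms(3) by (metis map_eq_conv)
  next
    case False then show ?thesis using assms(1,2) unfolding coords_def by auto
  qed
qed

lemma Phi_inj: "inj_on (Phi n) (X_A n \<alpha>)"
  unfolding inj_on_def X_A_def Phi_def by (auto simp del: upt_Suc dest: map_inj_coords)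

lemma Phi_img: "Phi n ` X_A n (\<alpha>::'a::field) = SL n \<alpha>"
proof
  show "Phi n ` X_A n \<alpha> \<subseteq> SL n \<alpha>"
  proof
    fix p assume "p \<in> Phi n ` X_A n \<alpha>"
    then obtain x x' where p: "p = Phi n (x, x')" and xx: "(x, x') \<in> X_A n \<alpha>" by auto
    have "eqsL \<alpha> 1 (map x [1..<n+1]) (map x' [1..<n+1])"
      using xx eqs_equiv[of \<alpha> x n x'] unfolding X_A_def by simp
    moreover have "length (map x [1..<n+1]) = n" by simp
    ultimately show "p \<in> SL n \<alpha>" unfolding p Phi_def SL_def by simp
  qed
next
  show "SL n \<alpha> \<subseteq> Phi n ` X_A n \<alpha>"
  proof
    fix p assume p: "p \<in> SL n \<alpha>"
    obtain xs ys where pe: "p = (xs, ys)" by force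
    from p pe have l: "length xs = n" and e: "eqsL \<alpha> 1 xs ys" by (auto simp: SL_def)
    have l2: "length ys = n" using eqsL_len[OF e] l by simp
    define x where "x = (\<lambda>i. if i \<in> {1..n} then xs ! (i - 1) else 0)"
    define x' where "x' = (\<lambda>i. if i \<in> {1..n} then ys ! (i - 1) else 0)"
    have mx: "map x [1..<n+1] = xs"
      by (rule nth_equalityI) (auto simp del: upt_Suc simp: x_def l)
    have mx': "map x' [1..<n+1] = ys"
      by (rule nth_equalityI) (auto simp del: upt_Suc simp: x'_def l2)
    have "(x, x') \<in> X_A n \<alpha>"
      unfolding X_A_def coords_def using e eqs_equiv[of \<alpha> x n x'] mx mx'
      by (auto simp del: upt_Suc simp: x_def x'_def)
    moreover have "p = Phi n (x, x')" unfolding Phi_def pe using mx mx' by simp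
    ultimately show "p \<in> Phi n ` X_A n \<alpha>" by blast
  qed
qed

lemma N_A_cnt: "N_A n (\<alpha>::'a::{finite,field}) = cnt n \<alpha>"
  unfolding N_A_def cnt_def using Phi_img Phi_inj card_image by metis

lemma finite_X: "finite (X_A n (\<alpha>::'a::{finite,field}))"
  using finite_imageD[of "Phi n" "X_A n \<alpha>"] Phi_img Phi_inj finite_SL by metis

theorem mainTheorem7:
  fixes n :: nat
  defines "q \<equiv> card (UNIV :: 'a::{finite,field} set)"
  shows "real (\<Sum>\<alpha>\<in>(UNIV::'a set) - {0}. N_A n \<alpha>)
           = (real q ^ (n + 2) + (-1) ^ (n + 1)) / (real q + 1)
       \<and> real (card (Y_A n :: ('a \<times> (nat \<Rightarrow> 'a) \<times> (nat \<Rightarrow> 'a)) set))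
           = (real q ^ (n + 2) + (-1) ^ (n + 1)) / (real q + 1)"
proof -
  have s: "(\<Sum>\<alpha>\<in>(UNIV::'a set) - {0}. N_A n \<alpha>) = ss n TYPE('a)"
    unfolding ss_def by (simp add: N_A_cnt)
  have r: "real (ss n TYPE('a)) = (real q ^ (n + 2) + (-1) ^ (n + 1)) / (real q + 1)"
    using ss_closed[where 'a='a, of n] unfolding q_def[symmetric]
    by (simp add: eq_divide_eq add_pos_nonneg)
  have Y: "(Y_A n :: ('a \<times> (nat \<Rightarrow> 'a) \<times> (nat \<Rightarrow> 'a)) set) = Sigma ((UNIV::'a set) - {0}) (X_A n)"
    unfolding Y_A_def X_A_def by auto
  have cY: "card (Y_A n :: ('a \<times> (nat \<Rightarrow> 'a) \<times> (nat \<Rightarrow> 'a)) set) = (\<Sum>\<alpha>\<in>(UNIV::'a set) - {0}. N_A n \<alpha>)"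
    unfolding Y N_A_def by (rule card_SigmaI) (auto intro: finite_X)
  show ?thesis using s r cY by simp
qed

end
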